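(* In the setting below, for each $1\le k\le n$ and each $1\le t\le mn$, $$\mathbb{E}\left(X_{k,t+1}\mid g_{\le t}, z_{\le t-1}\right)\le X_{k,t}.$$
   Context: Setting: $m,n$ are positive integers with $n\ge 1200\sqrt m$. A deck of $mn$ cards with $m$ copies of each label $1,\dots,n$ is shuffled uniformly at random. A fixed guessing strategy is used: in round $t=1,\dots,mn$ the Guesser guesses $g_t\in\{1,\dots,n\}$, a function (possibly randomized independently of the deck) of $y_1,\dots,y_{t-1}$, where $y_t\in\{0,1\}$ is the indicator that the $t$-th card has label $g_t$. For a vector $v$, $v_{\le t}:=(v_1,\dots,v_t)$. For $1\le k\le n$, $1\le t\le mn+1$: $a(k,t):=|\{1\le i<t: g_i=k\}|$. Let $Y:=\lfloor \tfrac16\sqrt m\, n\rfloor$. Let $(z_1,\dots,z_{mn})\in\{0,1\}^{mn}$ be a random vector (on an extension of the probability space), with $c(k,t):=|\{1\le i<t: g_i=k,\ z_i=1\}|$, satisfying almost surely: (a) for all $k,t$: $m-\max\{mn-a(k,t)-Y,0\}\le c(k,t)\le m$; (b) for each $t$, conditioned on $g_{\le t},y_{\le t}$, the coordinates of $z_{\le t}$ are mutually independent and independent from $g_{\le mn},y_{\le mn}$; (c) for each $t$, if $a(g_t,t)<mn-Y$ then $\mathbb{E}(z_t\mid g_{\le t},z_{\le t-1})=\frac{m-c(g_t,t)}{mn-a(g_t,t)-Y}$; (d) for each $t$, if $\mathbb{E}(y_t\mid g_{\le t},y_{\le t-1})\le\mathbb{E}(z_t\mid g_{\le t},z_{\le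 t-1})$ then $y_t\le z_t$. (Such a vector exists.) Define $f:\mathbb{R}\to\mathbb{R}$ by $f(x)=x^2$ if $x\le 0$, $f(x)=0$ if $0<x<Y/n$, and $f(x)=(x-Y/n)^2$ if $x\ge Y/n$. For $1\le k\le n$, $1\le t\le mn+1$, let $$X_{k,t}:=f\!\left(c(k,t)-\frac{a(k,t)}{n}\right)-3c(k,t)-\frac{3a(k,t)}{n}.$$ *)

theory Defs
  imports "HOL-Probability.Probability"
begin

definition decks :: "nat \<Rightarrow> nat \<Rightarrow> (nat \<Rightarrow> nat) set" where
  "decks m n = {d. (\<forall>i\<in>{1..m*n}. d i \<in> {1..n}) \<and> (\<forall>i. i \<notin> {1..m*n} \<longrightarrow> d i = 0)
                  \<and> (\<forall>k\<in>{1..n}. card {i\<in>{1..m*n}. d i = k} = m)}"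

definition Yc :: "nat \<Rightarrow> nat \<Rightarrow> nat" where
  "Yc m n = nat \<lfloor>sqrt (real m) * real n / 6\<rfloor>"

definition yind :: "('a \<Rightarrow> nat \<Rightarrow> nat) \<Rightarrow> (nat \<Rightarrow> 'a \<Rightarrow> nat) \<Rightarrow> nat \<Rightarrow> 'a \<Rightarrow> nat" where
  "yind deck g t \<omega> = (if deck \<omega> t = g t \<omega> then 1 else 0)"

definition acnt :: "(nat \<Rightarrow> 'a \<Rightarrow> nat) \<Rightarrow> nat \<Rightarrow> nat \<Rightarrow> 'a \<Rightarrow> nat" where
  "acnt g k t \<omega> = card {i. 1 \<le> i \<and> i < t \<and> g i \<omega> = k}"

definition ccnt :: "(nat \<Rightarrow> 'a \<Rightarrow> nat) \<Rightarrow> (nat \<Rightarrow> 'a \<Rightarrow> nat) \<Rightarrow> nat \<Rightarrow> nat \<Rightarrow> 'a \<Rightarrow> nat" where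
  "ccnt g z k t \<omega> = card {i. 1 \<le> i \<and> i < t \<and> g i \<omega> = k \<and> z i \<omega> = 1}"

definition fpen :: "nat \<Rightarrow> nat \<Rightarrow> real \<Rightarrow> real" where
  "fpen m n x = (if x \<le> 0 then x\<^sup>2
                 else if x < real (Yc m n) / real n then 0
                 else (x - real (Yc m n) / real n)\<^sup>2)"

definition Xv :: "nat \<Rightarrow> nat \<Rightarrow> (nat \<Rightarrow> 'a \<Rightarrow> nat) \<Rightarrow> (nat \<Rightarrow> 'a \<Rightarrow> nat) \<Rightarrow> nat \<Rightarrow> nat \<Rightarrow> 'a \<Rightarrow> real" where
  "Xv m n g z k t \<omega> =
     fpen m n (real (ccnt g z k t \<omega>) - real (acnt g k t \<omega>) / real n)
     - 3 * real (ccnt g z k t \<omega>) - 3 * real (acnt g k t \<omega>) / real n"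

definition gen_alg :: "'a measure \<Rightarrow> ('a \<Rightarrow> 'b) \<Rightarrow> 'a measure" where
  "gen_alg M h = vimage_algebra (space M) h (count_space UNIV)"

definition cond_indep_sets :: "'a measure \<Rightarrow> 'a measure \<Rightarrow> ('i \<Rightarrow> 'a set set) \<Rightarrow> 'i set \<Rightarrow> bool" where
  "cond_indep_sets M F S I \<longleftrightarrow>
     (\<forall>j\<in>I. S j \<subseteq> sets M) \<and>
     (\<forall>J\<subseteq>I. J \<noteq> {} \<longrightarrow> finite J \<longrightarrow> (\<forall>A. (\<forall>j\<in>J. A j \<in> S j) \<longrightarrow>
        (AE \<omega> in M. real_cond_exp M F (indicator (\<Inter>j\<in>J. A j)) \<omega>
                     = (\<Prod>j\<in>J. real_cond_exp M F (indicator (A j)) \<omega>))))"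

end

theory Submission
  imports Defs
begin

lemma t1: "(\<lambda>p. fst p # snd p) \<in> (count_space UNIV :: (nat \<times> nat list) measure) \<rightarrow>\<^sub>M count_space UNIV" by (simp only: measurable_count_space_eq1) simp
lemma t2: "(count_space UNIV \<Otimes>\<^sub>M count_space UNIV :: (nat \<times> nat list) measure) = count_space UNIV"
    using pair_measure_countable[of "UNIV::nat set" "UNIV :: nat list set"] by simp
lemma meas_map:
  assumes "\<forall>i. f i \<in> M \<rightarrow>\<^sub>M count_space UNIV"
  shows "(\<lambda>\<omega>. map (\<lambda>i. f i \<omega>) xs) \<in> M \<rightarrow>\<^sub>M (count_space UNIV :: nat list measure)"
proof (induction xs)
  case Nil
  show ?case by (simp only: list.map) (rule measurable_const, simp)
next
  case (Cons x xs)
  have 1: "(\<lambda>\<omega>. (f x \<omega>, map (\<lambda>i. f i \<omega>) xs)) \<in> M \<rightarrow>\<^sub>M count_space UNIV \<Otimes>\<^sub>M count_space UNIV"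
    using Cons assms by (intro measurable_Pair) blast+
  have "(\<lambda>\<omega>. (\<lambda>p. fst p # snd p) (f x \<omega>, map (\<lambda>i. f i \<omega>) xs)) \<in> M \<rightarrow>\<^sub>M count_space UNIV"
    using measurable_comp[OF 1[unfolded t2] t1] by (simp add: comp_def)
  then show ?case by (simp only: list.map fst_conv snd_conv)
qed
lemma meas_pair_lists:
  assumes "\<forall>i. f i \<in> M \<rightarrow>\<^sub>M count_space UNIV" "\<forall>i. g i \<in> M \<rightarrow>\<^sub>M count_space UNIV"
  shows "(\<lambda>\<omega>. (map (\<lambda>i. f i \<omega>) xs, map (\<lambda>i. g i \<omega>) ys)) \<in> M \<rightarrow>\<^sub>M (count_space UNIV :: (nat list \<times> nat list) measure)"
proof -
  have 1: "(\<lambda>\<omega>. (map (\<lambda>i. f i \<omega>) xs, map (\<lambda>i. g i \<omega>) ys)) \<in> M \<rightarrow>\<^sub>M count_space UNIV \<Otimes>\<^sub>M count_space UNIV"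
    using meas_map[OF assms(1)] meas_map[OF assms(2)] by (intro measurable_Pair) blast+
  have 2: "(count_space UNIV \<Otimes>\<^sub>M count_space UNIV :: (nat list \<times> nat list) measure) = count_space UNIV"
    using pair_measure_countable[of "UNIV::nat list set" "UNIV :: nat list set"] by simp
  show ?thesis using 1 unfolding 2 .
qed

lemma gen_alg_subalg:
  assumes "h \<in> M \<rightarrow>\<^sub>M count_space UNIV"
  shows "subalgebra M (gen_alg M h)"
  unfolding subalgebra_def gen_alg_def
proof
  show "space (vimage_algebra (space M) h (count_space UNIV)) = space M" by (rule space_vimage_algebra)
  have "sets (vimage_algebra (space M) h (count_space UNIV)) = {h -` A \<inter> space M |A. A \<in> sets (count_space UNIV)}"
    by (rule sets_vimage_algebra2) simp
  then show "sets (vimage_algebra (space M) h (count_space UNIV)) \<subseteq> sets M"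
    using measurable_sets[OF assms] by auto
qed

lemma gen_alg_factor:
  assumes "\<forall>\<omega>\<in>space M. \<forall>\<omega>'\<in>space M. h \<omega> = h \<omega>' \<longrightarrow> \<psi> \<omega> = \<psi> \<omega>'"
  shows "(\<psi> :: _ \<Rightarrow> real) \<in> borel_measurable (gen_alg M h)"
proof -
  define \<phi> where "\<phi> v = \<psi> (SOME \<omega>. \<omega> \<in> space M \<and> h \<omega> = v)" for v
  have 1: "h \<in> gen_alg M h \<rightarrow>\<^sub>M count_space UNIV"
    unfolding gen_alg_def by (rule measurable_vimage_algebra1) simp
  have 2: "\<phi> \<in> count_space UNIV \<rightarrow>\<^sub>M borel" by (simp only: measurable_count_space_eq1) simp
  have 3: "(\<lambda>\<omega>. \<phi> (h \<omega>)) \<in> borel_measurable (gen_alg M h)"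
    using measurable_comp[OF 1 2] by (simp add: comp_def)
  have 4: "\<phi> (h \<omega>) = \<psi> \<omega>" if "\<omega> \<in> space (gen_alg M h)" for \<omega>
  proof -
    have w: "\<omega> \<in> space M" using that by (simp add: gen_alg_def)
    hence "\<exists>\<omega>'. \<omega>' \<in> space M \<and> h \<omega>' = h \<omega>" by blast
    hence "(SOME \<omega>'. \<omega>' \<in> space M \<and> h \<omega>' = h \<omega>) \<in> space M \<and> h (SOME \<omega>'. \<omega>' \<in> space M \<and> h \<omega>' = h \<omega>) = h \<omega>"
      by (rule someI_ex)
    thus ?thesis using assms w unfolding \<phi>_def by metis
  qed
  show ?thesis using measurable_cong[of "gen_alg M h" "\<lambda>\<omega>. \<phi> (h \<omega>)" \<psi>] 3 4 by blast
qed
definition fp :: "real \<Rightarrow> real \<Rightarrow> real" where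
  "fp Y x = (if x \<le> 0 then x\<^sup>2 else if x < Y then 0 else (x - Y)\<^sup>2)"
definition Dp :: "real \<Rightarrow> real \<Rightarrow> real" where
  "Dp Y x = (if x \<le> 0 then 2*x else if x < Y then 0 else 2*(x - Y))"

lemma hA: "0 \<le> Y \<Longrightarrow> Y \<le> y \<Longrightarrow> Y * Y \<le> Y * (y * (2::real))"
  by (simp add: mult_left_mono)
lemma hB: "x * (y * 2) \<le> x * x + y * (y::real)"
  by (smt (verit) mult.commute power2_eq_square sum_squares_bound)
lemma hC: "x < Y \<Longrightarrow> Y \<le> y \<Longrightarrow> Y * Y + x * (y * 2) \<le> x * x + Y * (y * (2::real))"
proof -
  assume a: "x < Y" "Y \<le> y"
  have "0 \<le> (Y - x) * (2*y - Y - x)" using a by (intro mult_nonneg_nonneg) auto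
  thus ?thesis by (simp add: algebra_simps)
qed
lemma hD: "y \<le> 0 \<Longrightarrow> 0 \<le> Y \<Longrightarrow> Y * (y * 2) \<le> Y * (Y::real)"
  by (metis mult_le_0_iff order.trans zero_le_numeral zero_le_square)
lemma hE: "Y * (y * 2) \<le> Y * Y + y * (y::real)"
  by (smt (verit) mult.commute power2_eq_square sum_squares_bound)

lemma fp_quad: assumes "Y \<ge> 0" shows "fp Y y \<le> fp Y x + Dp Y x * (y - x) + (y - x)\<^sup>2"
  using assms unfolding fp_def Dp_def
  apply (cases "x \<le> 0"; cases "x < Y"; cases "y \<le> 0"; cases "y < Y")
  apply (simp_all add: power2_eq_square algebra_simps hB hE)
  using hA hC hD by (auto simp: not_less)

lemma fp_mono: assumes "Y \<ge> 0" "0 \<le> u" "u \<le> v" shows "fp Y u \<le> fp Y v"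
  using assms unfolding fp_def power2_eq_square
  by (auto intro: mult_mono)

lemma step_ineq:
  fixes n x p Y :: real
  assumes "n \<ge> 1" "Y \<ge> 0" "0 \<le> p" "p \<le> 1" "x \<le> 0 \<Longrightarrow> p \<ge> 1/n" "x \<ge> Y \<Longrightarrow> p \<le> 1/n"
  shows "fp Y (x-1/n) - fp Y x - 3/n + p*(fp Y (x+1-1/n) - fp Y (x-1/n) - 3) \<le> 0"
proof -
  have q1: "fp Y (x-1/n) \<le> fp Y x + Dp Y x * (-1/n) + (1/n)\<^sup>2"
    using fp_quad[OF assms(2), of "x-1/n" x] by (simp add: power2_eq_square)
  have q2: "fp Y (x+1-1/n) \<le> fp Y x + Dp Y x * (1-1/n) + (1-1/n)\<^sup>2"
    using fp_quad[OF assms(2), of "x+1-1/n" x] by simp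
  have n0: "0 < n" using assms by simp
  have sg: "Dp Y x * (p - 1/n) \<le> 0"
  proof (cases "x \<le> 0")
    case True thus ?thesis using assms(5) by (simp add: Dp_def mult_nonpos_nonneg)
  next
    case False
    show ?thesis
    proof (cases "x < Y")
      case True thus ?thesis using False by (simp add: Dp_def)
    next
      case F2: False
      hence "p - 1/n \<le> 0" using assms(6) by simp
      moreover have "Dp Y x \<ge> 0" using F2 False by (simp add: Dp_def)
      ultimately show ?thesis by (simp add: mult_nonneg_nonpos)
    qed
  qed
  have a: "(1/n)\<^sup>2 \<le> 1/n" using assms by (simp add: power2_eq_square divide_simps)
  have b: "(1-1/n)\<^sup>2 \<le> 1" using assms by (intro power_le_one) (auto simp: divide_simps)
  have "fp Y (x-1/n) - fp Y x - 3/n + p*(fp Y (x+1-1/n) - fp Y (x-1/n) - 3)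
       = (1-p)*(fp Y (x-1/n) - fp Y x) + p*(fp Y (x+1-1/n) - fp Y x) - 3/n - 3*p"
    by (simp add: algebra_simps)
  also have "\<dots> \<le> (1-p)*(Dp Y x * (-1/n) + (1/n)\<^sup>2) + p*(Dp Y x * (1-1/n) + (1-1/n)\<^sup>2) - 3/n - 3*p"
    using q1 q2 assms(3,4) by (intro diff_right_mono add_mono mult_left_mono) auto
  also have "\<dots> = Dp Y x * (p - 1/n) + (1-p)*(1/n)\<^sup>2 + p*(1-1/n)\<^sup>2 - 3/n - 3*p"
    using n0 by (simp add: field_simps)
  also have "\<dots> \<le> 0 + 1 * (1/n) + p * 1 - 3/n - 3*p"
    using sg a b assms(3,4) by (intro diff_right_mono add_mono mult_mono) auto
  also have "\<dots> \<le> 0" using assms n0 by (simp add: divide_simps) (smt (verit) mult_nonneg_nonneg)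
  finally show ?thesis .
qed

lemma fpen_fp: "fpen m n = fp (real (Yc m n) / real n)"
  by (rule ext) (simp add: fpen_def fp_def)

lemma card_Suc_split:
  "card {i. 1 \<le> i \<and> i < Suc t \<and> P i} = card {i. 1 \<le> i \<and> i < t \<and> P i} + (if 1 \<le> t \<and> P t then 1 else 0)"
proof (cases "1 \<le> t \<and> P t")
  case True
  have "{i. 1 \<le> i \<and> i < Suc t \<and> P i} = insert t {i. 1 \<le> i \<and> i < t \<and> P i}" using True by auto
  moreover have "finite {i. 1 \<le> i \<and> i < t \<and> P i}" by simp
  ultimately show ?thesis using True by simp
next
  case False
  have "{i. 1 \<le> i \<and> i < Suc t \<and> P i} = {i. 1 \<le> i \<and> i < t \<and> P i}" using False by (auto simp: less_Suc_eq)
  thus ?thesis using False by simp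
qed

lemma card_le_pred: "card {i. 1 \<le> i \<and> i < t \<and> P i} \<le> t - 1"
proof -
  have "card {i. 1 \<le> i \<and> i < t \<and> P i} \<le> card {1..<t}" by (rule card_mono) auto
  thus ?thesis by simp
qed

lemma acnt_Suc: "acnt g k (Suc t) \<omega> = acnt g k t \<omega> + (if 1 \<le> t \<and> g t \<omega> = k then 1 else 0)"
  unfolding acnt_def by (rule card_Suc_split)
lemma ccnt_Suc: "ccnt g z k (Suc t) \<omega> = ccnt g z k t \<omega> + (if 1 \<le> t \<and> g t \<omega> = k \<and> z t \<omega> = 1 then 1 else 0)"
  unfolding ccnt_def using card_Suc_split[of t "\<lambda>i. g i \<omega> = k \<and> z i \<omega> = 1"] by simp
lemma acnt_le: "acnt g k t \<omega> \<le> t - 1" unfolding acnt_def by (rule card_le_pred)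
lemma ccnt_le: "ccnt g z k t \<omega> \<le> t - 1" unfolding ccnt_def using card_le_pred[of t "\<lambda>i. g i \<omega> = k \<and> z i \<omega> = 1"] by simp

lemma acnt_cong: "(\<And>i. 1 \<le> i \<Longrightarrow> i < t \<Longrightarrow> g i \<omega> = g i \<omega>') \<Longrightarrow> acnt g k t \<omega> = acnt g k t \<omega>'"
  unfolding acnt_def by (rule arg_cong[where f=card]) auto
lemma ccnt_cong: "(\<And>i. 1 \<le> i \<Longrightarrow> i < t \<Longrightarrow> g i \<omega> = g i \<omega>' \<and> z i \<omega> = z i \<omega>') \<Longrightarrow> ccnt g z k t \<omega> = ccnt g z k t \<omega>'"
  unfolding ccnt_def by (rule arg_cong[where f=card]) auto

lemma map_eq_pt: "map (\<lambda>i. f i \<omega>) [a..<b] = map (\<lambda>i. f i \<omega>') [a..<b] \<Longrightarrow> a \<le> i \<Longrightarrow> i < b \<Longrightarrow> f i \<omega> = f i \<omega>'"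
  by (simp add: map_eq_conv)

lemma integrable_finite_range:
  assumes "finite_measure M" "f \<in> borel_measurable M" "finite S" "\<forall>\<omega>\<in>space M. f \<omega> \<in> S"
  shows "integrable M (f::_\<Rightarrow>real)"
proof -
  interpret finite_measure M by fact
  show ?thesis
  proof (rule integrable_const_bound[where B="Max (abs ` S)"])
    show "AE x in M. norm (f x) \<le> Max (abs ` S)"
      using assms(3,4) by (intro AE_I2) (auto intro: Max_ge)
  qed fact
qed

lemma real_meas: "h \<in> M \<rightarrow>\<^sub>M count_space UNIV \<Longrightarrow> (\<lambda>\<omega>. real (h \<omega>)) \<in> borel_measurable M"
proof -
  assume h: "h \<in> M \<rightarrow>\<^sub>M count_space UNIV"
  have "(real :: nat \<Rightarrow> real) \<in> count_space UNIV \<rightarrow>\<^sub>M borel" by (simp only: measurable_count_space_eq1) simp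
  from measurable_comp[OF h this] show ?thesis by (simp add: comp_def)
qed
theorem lemma2p2:
  fixes M :: "'a measure" and N :: "'r measure"
    and m n :: nat
    and deck :: "'a \<Rightarrow> nat \<Rightarrow> nat"
    and R :: "'a \<Rightarrow> 'r" and G :: "nat \<Rightarrow> 'r \<Rightarrow> nat list \<Rightarrow> nat"
    and g z :: "nat \<Rightarrow> 'a \<Rightarrow> nat"
  assumes P: "prob_space M"
    and mpos: "m > 0" and npos: "n > 0"
    and nbig: "real n \<ge> 1200 * sqrt (real m)"
    \<comment> \<open>the deck is uniformly shuffled\<close>
    and deck_meas: "deck \<in> M \<rightarrow>\<^sub>M count_space (decks m n)"
    and deck_unif: "\<forall>d\<in>decks m n. measure M (deck -` {d} \<inter> space M) = 1 / real (card (decks m n))"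
    \<comment> \<open>the (possibly randomized) strategy: g_t is a function of the guesser's private
        randomness R (independent of the deck) and of y_1, ..., y_{t-1}\<close>
    and R_meas: "R \<in> M \<rightarrow>\<^sub>M N"
    and R_indep: "prob_space.indep_set M (sets (vimage_algebra (space M) R N))
                 (sets (vimage_algebra (space M) deck (count_space (decks m n))))"
    and g_strat: "\<forall>t\<in>{1..m*n}. \<forall>\<omega>\<in>space M.
                    g t \<omega> = G t (R \<omega>) (map (\<lambda>i. yind deck g i \<omega>) [1..<t])"
    and G_range: "\<forall>t\<in>{1..m*n}. \<forall>r ys. G t r ys \<in> {1..n}"
    and g_meas: "\<forall>t. g t \<in> M \<rightarrow>\<^sub>M count_space UNIV"
    \<comment> \<open>the auxiliary 0/1 vector z\<close>
    and z_meas: "\<forall>t. z t \<in> M \<rightarrow>\<^sub>M count_space UNIV"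
    and z_01: "\<forall>t\<in>{1..m*n}. \<forall>\<omega>\<in>space M. z t \<omega> \<in> {0, 1}"
    \<comment> \<open>(a)\<close>
    and cond_a: "AE \<omega> in M. \<forall>k\<in>{1..n}. \<forall>t\<in>{1..m*n+1}.
        real m - max (real (m*n) - real (acnt g k t \<omega>) - real (Yc m n)) 0 \<le> real (ccnt g z k t \<omega>)
        \<and> ccnt g z k t \<omega> \<le> m"
    \<comment> \<open>(b)\<close>
    and cond_b: "\<forall>t\<in>{1..m*n}.
        cond_indep_sets M
          (gen_alg M (\<lambda>\<omega>. (map (\<lambda>i. g i \<omega>) [1..<t+1], map (\<lambda>i. yind deck g i \<omega>) [1..<t+1])))
          (\<lambda>j. case j of
                 None \<Rightarrow> sets (gen_alg M (\<lambda>\<omega>. (map (\<lambda>i. g i \<omega>) [1..<m*n+1],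
                                                map (\<lambda>i. yind deck g i \<omega>) [1..<m*n+1])))
               | Some i \<Rightarrow> sets (gen_alg M (z i)))
          (insert None (Some ` {1..t}))"
    \<comment> \<open>(c)\<close>
    and cond_c: "\<forall>t\<in>{1..m*n}. AE \<omega> in M.
        real (acnt g (g t \<omega>) t \<omega>) < real (m*n) - real (Yc m n) \<longrightarrow>
        real_cond_exp M (gen_alg M (\<lambda>\<omega>. (map (\<lambda>i. g i \<omega>) [1..<t+1], map (\<lambda>i. z i \<omega>) [1..<t])))
                      (\<lambda>\<omega>. real (z t \<omega>)) \<omega>
        = (real m - real (ccnt g z (g t \<omega>) t \<omega>))
          / (real (m*n) - real (acnt g (g t \<omega>) t \<omega>) - real (Yc m n))"
    \<comment> \<open>(d)\<close>
    and cond_d: "\<forall>t\<in>{1..m*n}. AE \<omega> in M.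
        real_cond_exp M (gen_alg M (\<lambda>\<omega>. (map (\<lambda>i. g i \<omega>) [1..<t+1], map (\<lambda>i. yind deck g i \<omega>) [1..<t])))
                      (\<lambda>\<omega>. real (yind deck g t \<omega>)) \<omega>
        \<le> real_cond_exp M (gen_alg M (\<lambda>\<omega>. (map (\<lambda>i. g i \<omega>) [1..<t+1], map (\<lambda>i. z i \<omega>) [1..<t])))
                      (\<lambda>\<omega>. real (z t \<omega>)) \<omega>
        \<longrightarrow> yind deck g t \<omega> \<le> z t \<omega>"
  shows "\<forall>k\<in>{1..n}. \<forall>t\<in>{1..m*n}. AE \<omega> in M.
           real_cond_exp M (gen_alg M (\<lambda>\<omega>. (map (\<lambda>i. g i \<omega>) [1..<t+1], map (\<lambda>i. z i \<omega>) [1..<t])))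
                         (Xv m n g z k (t+1)) \<omega>
           \<le> Xv m n g z k t \<omega>"
proof -
  interpret P: prob_space M by (rule P)
  show ?thesis
  proof (intro ballI)
    fix k t assume k: "k \<in> {1..n}" and t: "t \<in> {1..m*n}"
    define hF where "hF = (\<lambda>\<omega>. (map (\<lambda>i. g i \<omega>) [1..<t+1], map (\<lambda>i. z i \<omega>) [1..<t]))"
    define F where "F = gen_alg M hF"
    have hF_meas: "hF \<in> M \<rightarrow>\<^sub>M count_space UNIV" unfolding hF_def
      by (rule meas_pair_lists) (use g_meas z_meas in auto)
    have sub: "subalgebra M F" unfolding F_def by (rule gen_alg_subalg[OF hF_meas])
    interpret S: finite_measure_subalgebra M F
      by (intro finite_measure_subalgebra.intro P.finite_measure_axioms finite_measure_subalgebra_axioms.intro sub)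
    have n1: "real n \<ge> 1" using npos by simp
    define Yr where "Yr = real (Yc m n) / real n"
    have Yr0: "Yr \<ge> 0" unfolding Yr_def by simp
    define a where "a \<omega> = real (acnt g k t \<omega>)" for \<omega>
    define c where "c \<omega> = real (ccnt g z k t \<omega>)" for \<omega>
    define x where "x \<omega> = c \<omega> - a \<omega> / real n" for \<omega>
    define A0 where "A0 \<omega> = (if g t \<omega> = k then fp Yr (x \<omega> - 1/real n) - fp Yr (x \<omega>) - 3/real n else 0)" for \<omega>
    define B0 where "B0 \<omega> = (if g t \<omega> = k then fp Yr (x \<omega> + 1 - 1/real n) - fp Yr (x \<omega> - 1/real n) - 3 else 0)" for \<omega>
    define B1 where "B1 \<omega> = (if a \<omega> < real (m*n) - real (Yc m n) then B0 \<omega> else 0)" for \<omega>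
    define Xt where "Xt = Xv m n g z k t"
    define X1 where "X1 = Xv m n g z k (t+1)"
    define W where "W \<omega> = Xt \<omega> + A0 \<omega>" for \<omega>
    define zr where "zr \<omega> = real (z t \<omega>)" for \<omega>
    have t1: "1 \<le> t" using t by simp
    have Xt_eq: "Xt \<omega> = fp Yr (x \<omega>) - 3 * c \<omega> - 3 * a \<omega> / real n" for \<omega>
      unfolding Xt_def Xv_def fpen_fp Yr_def x_def a_def c_def by simp
    have z01: "\<omega> \<in> space M \<Longrightarrow> z t \<omega> = 0 \<or> z t \<omega> = 1" for \<omega> using z_01 t by auto
    have a1: "real (acnt g k (t+1) \<omega>) = a \<omega> + (if g t \<omega> = k then 1 else 0)" for \<omega>
      using acnt_Suc[of g k t \<omega>] t1 by (simp add: a_def)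
    have c1: "real (ccnt g z k (t+1) \<omega>) = c \<omega> + (if g t \<omega> = k \<and> z t \<omega> = 1 then 1 else 0)" for \<omega>
      using ccnt_Suc[of g z k t \<omega>] t1 by (simp add: c_def)
    have X1_eq: "X1 \<omega> = W \<omega> + B0 \<omega> * zr \<omega>" if w: "\<omega> \<in> space M" for \<omega>
    proof -
      have X1u: "X1 \<omega> = fp Yr (real (ccnt g z k (t+1) \<omega>) - real (acnt g k (t+1) \<omega>) / real n)
          - 3 * real (ccnt g z k (t+1) \<omega>) - 3 * real (acnt g k (t+1) \<omega>) / real n"
        unfolding X1_def Xv_def fpen_fp Yr_def by simp
      show ?thesis
      proof (cases "g t \<omega> = k")
        case False
        thus ?thesis using X1u a1[of \<omega>] c1[of \<omega>] by (simp add: W_def Xt_eq A0_def B0_def x_def)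
      next
        case True
        have e1: "(c \<omega> + 1) - (a \<omega> + 1) / real n = x \<omega> + 1 - 1/real n"
          unfolding x_def by (simp add: add_divide_distrib)
        have e0: "fp Yr (c \<omega> - (a \<omega> / real n + 1 / real n)) = fp Yr (x \<omega> - 1/real n)"
          by (simp only: x_def diff_diff_eq)
        from z01[OF w] show ?thesis
        proof
          assume z0: "z t \<omega> = 0"
          show ?thesis using X1u a1[of \<omega>] c1[of \<omega>] True z0 e0
            by (simp add: W_def Xt_eq A0_def B0_def zr_def add_divide_distrib)
        next
          assume z1: "z t \<omega> = 1"
          show ?thesis using X1u a1[of \<omega>] c1[of \<omega>] True z1 e1
            by (simp add: W_def Xt_eq A0_def B0_def zr_def add_divide_distrib algebra_simps)
        qed
      qed
    qed
    have hist: "a \<omega> = a \<omega>' \<and> c \<omega> = c \<omega>' \<and> g t \<omega> = g t \<omega>'" if "hF \<omega> = hF \<omega>'" for \<omega> \<omega>'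
    proof -
      have gm: "map (\<lambda>i. g i \<omega>) [1..<t+1] = map (\<lambda>i. g i \<omega>') [1..<t+1]"
        and zm: "map (\<lambda>i. z i \<omega>) [1..<t] = map (\<lambda>i. z i \<omega>') [1..<t]" using that by (auto simp: hF_def)
      have gi: "g i \<omega> = g i \<omega>'" if "1 \<le> i" "i < t+1" for i using map_eq_pt[OF gm that] .
      have zi: "z i \<omega> = z i \<omega>'" if "1 \<le> i" "i < t" for i using map_eq_pt[OF zm that] .
      have "acnt g k t \<omega> = acnt g k t \<omega>'" by (rule acnt_cong) (use gi in auto)
      moreover have "ccnt g z k t \<omega> = ccnt g z k t \<omega>'" by (rule ccnt_cong) (use gi zi in auto)
      moreover have "g t \<omega> = g t \<omega>'" using gi t1 by simp
      ultimately show ?thesis by (simp add: a_def c_def)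
    qed
    have XtF: "Xt \<in> borel_measurable F" unfolding F_def
    proof (rule gen_alg_factor, intro ballI impI)
      fix \<omega> \<omega>' assume "hF \<omega> = hF \<omega>'"
      from hist[OF this] show "Xt \<omega> = Xt \<omega>'" by (simp add: Xt_eq x_def)
    qed
    have A0F: "A0 \<in> borel_measurable F" unfolding F_def
    proof (rule gen_alg_factor, intro ballI impI)
      fix \<omega> \<omega>' assume "hF \<omega> = hF \<omega>'"
      from hist[OF this] show "A0 \<omega> = A0 \<omega>'" by (simp add: A0_def x_def)
    qed
    have B0F: "B0 \<in> borel_measurable F" unfolding F_def
    proof (rule gen_alg_factor, intro ballI impI)
      fix \<omega> \<omega>' assume "hF \<omega> = hF \<omega>'"
      from hist[OF this] show "B0 \<omega> = B0 \<omega>'" by (simp add: B0_def x_def)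
    qed
    have B1F: "B1 \<in> borel_measurable F" unfolding F_def
    proof (rule gen_alg_factor, intro ballI impI)
      fix \<omega> \<omega>' assume "hF \<omega> = hF \<omega>'"
      from hist[OF this] show "B1 \<omega> = B1 \<omega>'" by (simp add: B1_def B0_def x_def)
    qed
    have WF: "W \<in> borel_measurable F" unfolding W_def using XtF A0F by measurable
    have zrM: "zr \<in> borel_measurable M" unfolding zr_def by (rule real_meas) (use z_meas in auto)
    have WM: "W \<in> borel_measurable M" by (rule measurable_from_subalg[OF sub WF])
    have B0M: "B0 \<in> borel_measurable M" by (rule measurable_from_subalg[OF sub B0F])
    have B1M: "B1 \<in> borel_measurable M" by (rule measurable_from_subalg[OF sub B1F])
    have B1zM: "(\<lambda>\<omega>. B1 \<omega> * zr \<omega>) \<in> borel_measurable M" using B1M zrM by measurable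
    have X1M: "X1 \<in> borel_measurable M"
    proof -
      have "(\<lambda>\<omega>. W \<omega> + B0 \<omega> * zr \<omega>) \<in> borel_measurable M" using WM B0M zrM by measurable
      thus ?thesis using X1_eq measurable_cong[of M X1 "\<lambda>\<omega>. W \<omega> + B0 \<omega> * zr \<omega>"] by blast
    qed
    define Q where "Q = (real ` {0..t}) \<times> (real ` {0..t})"
    have Qf: "finite Q" unfolding Q_def by simp
    have acQ: "(a \<omega>, c \<omega>) \<in> Q" for \<omega>
    proof -
      have "acnt g k t \<omega> \<in> {0..t}" "ccnt g z k t \<omega> \<in> {0..t}"
        using acnt_le[of g k t \<omega>] ccnt_le[of g z k t \<omega>] by auto
      thus ?thesis unfolding Q_def a_def c_def by auto
    qed
    define \<Phi>0 where "\<Phi>0 = (\<lambda>(u::real, v::real). fp Yr (v - u / real n) - 3 * v - 3 * u / real n)"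
    define \<Phi>1 where "\<Phi>1 = (\<lambda>(u::real, v::real). fp Yr ((v - u / real n) - 1/real n) - fp Yr (v - u / real n) - 3/real n)"
    define \<Phi>2 where "\<Phi>2 = (\<lambda>(u::real, v::real). fp Yr ((v - u / real n) + 1 - 1/real n) - fp Yr ((v - u / real n) - 1/real n) - 3)"
    have XtI: "integrable M Xt"
    proof (rule integrable_finite_range[where S="\<Phi>0 ` Q"])
      show "\<forall>\<omega>\<in>space M. Xt \<omega> \<in> \<Phi>0 ` Q"
        using acQ by (auto simp: Xt_eq \<Phi>0_def x_def intro!: image_eqI[where x="(a _, c _)"])
    qed (use XtF measurable_from_subalg[OF sub] Qf P.finite_measure_axioms in auto)
    have A0I: "integrable M A0"
    proof (rule integrable_finite_range[where S="insert 0 (\<Phi>1 ` Q)"])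
      show "\<forall>\<omega>\<in>space M. A0 \<omega> \<in> insert 0 (\<Phi>1 ` Q)"
        using acQ by (auto simp: A0_def \<Phi>1_def x_def intro!: image_eqI[where x="(a _, c _)"])
    qed (use A0F measurable_from_subalg[OF sub] Qf P.finite_measure_axioms in auto)
    have WI: "integrable M W" unfolding W_def using XtI A0I by (rule Bochner_Integration.integrable_add)
    have B1zI: "integrable M (\<lambda>\<omega>. B1 \<omega> * zr \<omega>)"
    proof (rule integrable_finite_range[where S="(\<lambda>(p,q). p*q) ` (insert 0 (\<Phi>2 ` Q) \<times> {0,1})"])
      show "\<forall>\<omega>\<in>space M. B1 \<omega> * zr \<omega> \<in> (\<lambda>(p,q). p*q) ` (insert 0 (\<Phi>2 ` Q) \<times> {0,1})"
      proof
        fix \<omega> assume w: "\<omega> \<in> space M"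
        have "B1 \<omega> \<in> insert 0 (\<Phi>2 ` Q)"
          using acQ[of \<omega>] by (auto simp: B1_def B0_def \<Phi>2_def x_def intro!: image_eqI[where x="(a \<omega>, c \<omega>)"])
        moreover have "zr \<omega> \<in> {0,1}" using z01[OF w] by (auto simp: zr_def)
        ultimately show "B1 \<omega> * zr \<omega> \<in> (\<lambda>(p,q). p*q) ` (insert 0 (\<Phi>2 ` Q) \<times> {0,1})"
          by (intro image_eqI[where x="(B1 \<omega>, zr \<omega>)"]) auto
      qed
    qed (use B1zM Qf P.finite_measure_axioms in auto)
    have zrI: "integrable M zr"
      by (rule integrable_finite_range[where S="{0,1}"]) (use zrM z01 P.finite_measure_axioms in \<open>auto simp: zr_def\<close>)
    have AE1: "AE \<omega> in M. X1 \<omega> = W \<omega> + B1 \<omega> * zr \<omega>"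
      using cond_a AE_space
    proof eventually_elim
      case (elim \<omega>)
      have "B0 \<omega> * zr \<omega> = B1 \<omega> * zr \<omega>"
      proof (cases "a \<omega> < real (m*n) - real (Yc m n)")
        case True thus ?thesis by (simp add: B1_def)
      next
        case False
        show ?thesis
        proof (cases "g t \<omega> = k")
          case False thus ?thesis by (simp add: B1_def B0_def)
        next
          case gk: True
          have tt: "t \<in> {1..m*n+1}" "t+1 \<in> {1..m*n+1}" using t by auto
          have ca: "real m - max (real (m*n) - real (acnt g k t \<omega>) - real (Yc m n)) 0 \<le> real (ccnt g z k t \<omega>)"
            using elim(1) k tt(1) by blast
          have cb: "ccnt g z k (t+1) \<omega> \<le> m" using elim(1) k tt(2) by blast
          have "max (real (m*n) - real (acnt g k t \<omega>) - real (Yc m n)) 0 = 0"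
            using False by (simp add: a_def)
          hence "c \<omega> \<ge> real m" using ca by (simp add: c_def)
          moreover have "real (ccnt g z k (t+1) \<omega>) \<le> real m" using cb by simp
          ultimately have "z t \<omega> \<noteq> 1" using c1[of \<omega>] gk by auto
          hence "zr \<omega> = 0" using z01[OF elim(2)] by (auto simp: zr_def)
          thus ?thesis by simp
        qed
      qed
      thus ?case using X1_eq[OF elim(2)] by simp
    qed
    have WB: "(\<lambda>\<omega>. W \<omega> + B1 \<omega> * zr \<omega>) \<in> borel_measurable M" using WM B1zM by measurable
    note E1 = S.real_cond_exp_cong[OF AE1 X1M WB]
    note E2 = S.real_cond_exp_add[OF WI B1zI]
    note E3 = S.real_cond_exp_F_meas[OF WI WF]
    note E4 = S.real_cond_exp_mult[OF B1F zrM B1zI]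
    have P0: "AE \<omega> in M. real_cond_exp M F zr \<omega> \<ge> 0"
      by (rule S.real_cond_exp_pos[OF _ zrM]) (simp add: zr_def)
    have P1: "AE \<omega> in M. real_cond_exp M F zr \<omega> \<le> 1"
    proof (rule S.real_cond_exp_le_c[OF zrI], rule AE_I2)
      fix \<omega> assume "\<omega> \<in> space M"
      from z01[OF this] show "zr \<omega> \<le> 1" by (auto simp: zr_def)
    qed
    have C: "AE \<omega> in M. real (acnt g (g t \<omega>) t \<omega>) < real (m*n) - real (Yc m n) \<longrightarrow>
        real_cond_exp M F zr \<omega>
        = (real m - real (ccnt g z (g t \<omega>) t \<omega>))
          / (real (m*n) - real (acnt g (g t \<omega>) t \<omega>) - real (Yc m n))"
      unfolding F_def hF_def zr_def using cond_c t by blast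
    have G: "AE \<omega> in M. real_cond_exp M F X1 \<omega> \<le> Xt \<omega>"
      using E1 E2 E3 E4 P0 P1 C cond_a AE_space
    proof eventually_elim
      case (elim \<omega>)
      define p where "p = real_cond_exp M F zr \<omega>"
      have cx: "real_cond_exp M F X1 \<omega> = W \<omega> + B1 \<omega> * p"
        using elim(1-4) by (simp add: p_def)
      have p01: "0 \<le> p" "p \<le> 1" using elim(5,6) by (auto simp: p_def)
      have n0: "real n > 0" using npos by simp
      have key: "A0 \<omega> + B1 \<omega> * p \<le> 0"
      proof (cases "g t \<omega> = k")
        case False thus ?thesis by (simp add: A0_def B1_def B0_def)
      next
        case gk: True
        show ?thesis
        proof (cases "a \<omega> < real (m*n) - real (Yc m n)")
          case True
          define D where "D = real (m*n) - a \<omega> - real (Yc m n)"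
          have D0: "D > 0" using True by (simp add: D_def)
          have pe: "p = (real m - c \<omega>) / D"
            using elim(7) gk True by (simp add: p_def D_def a_def c_def)
          have mn: "real (m*n) = real m * real n" by simp
          have h0: "x \<omega> \<le> 0 \<Longrightarrow> p \<ge> 1/real n"
          proof -
            assume "x \<omega> \<le> 0"
            hence "c \<omega> \<le> a \<omega> / real n" by (simp add: x_def)
            hence "real n * c \<omega> \<le> a \<omega>" using n0 by (simp add: le_divide_eq mult.commute)
            hence "D \<le> real n * (real m - c \<omega>)" unfolding D_def mn by (simp add: algebra_simps)
            thus "p \<ge> 1/real n" unfolding pe using D0 n0 by (simp add: divide_simps mult.commute)
          qed
          have h1: "x \<omega> \<ge> Yr \<Longrightarrow> p \<le> 1/real n"
          proof -
            assume "x \<omega> \<ge> Yr"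
            hence "c \<omega> - a \<omega> / real n \<ge> real (Yc m n) / real n" by (simp add: x_def Yr_def)
            hence "real n * (c \<omega> - a \<omega> / real n) \<ge> real (Yc m n)" using n0 by (simp add: divide_le_eq mult.commute)
            hence "real n * c \<omega> - a \<omega> \<ge> real (Yc m n)" using n0 by (simp add: right_diff_distrib)
            hence "D \<ge> real n * (real m - c \<omega>)" unfolding D_def mn by (simp add: algebra_simps)
            thus "p \<le> 1/real n" unfolding pe using D0 n0 by (simp add: divide_simps mult.commute)
          qed
          have "fp Yr (x \<omega> - 1/real n) - fp Yr (x \<omega>) - 3/real n + p*(fp Yr (x \<omega> + 1 - 1/real n) - fp Yr (x \<omega> - 1/real n) - 3) \<le> 0"
            by (rule step_ineq[OF n1 Yr0 p01 h0 h1])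
          thus ?thesis using gk True by (simp add: A0_def B1_def B0_def mult.commute)
        next
          case False
          have tt: "t \<in> {1..m*n+1}" using t by auto
          have ca: "real m - max (real (m*n) - real (acnt g k t \<omega>) - real (Yc m n)) 0 \<le> real (ccnt g z k t \<omega>)"
            using elim(8) k tt by blast
          have "max (real (m*n) - real (acnt g k t \<omega>) - real (Yc m n)) 0 = 0"
            using False by (simp add: a_def)
          hence cm: "c \<omega> \<ge> real m" using ca by (simp add: c_def)
          have "acnt g k t \<omega> + 1 \<le> m * n" using acnt_le[of g k t \<omega>] t by auto
          hence "a \<omega> + 1 \<le> real m * real n" unfolding a_def
            by (metis of_nat_1 of_nat_add of_nat_le_iff of_nat_mult)
          hence "(a \<omega> + 1) / real n \<le> real m" using n0 by (simp add: divide_le_eq)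
          hence x0: "0 \<le> x \<omega> - 1/real n" using cm unfolding x_def by (simp add: add_divide_distrib)
          have fm: "fp Yr (x \<omega> - 1/real n) \<le> fp Yr (x \<omega>)" by (rule fp_mono[OF Yr0 x0]) simp
          have n3: "3 / real n \<ge> 0" by simp
          have "A0 \<omega> + B1 \<omega> * p = fp Yr (x \<omega> - 1/real n) - fp Yr (x \<omega>) - 3 / real n"
            using gk False by (simp add: A0_def B1_def)
          thus ?thesis using fm n3 by linarith
        qed
      qed
      show ?case using cx key by (simp add: W_def)
    qed
    show "AE \<omega> in M.
           real_cond_exp M (gen_alg M (\<lambda>\<omega>. (map (\<lambda>i. g i \<omega>) [1..<t+1], map (\<lambda>i. z i \<omega>) [1..<t])))
                         (Xv m n g z k (t+1)) \<omega>
           \<le> Xv m n g z k t \<omega>"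
      using G by (simp only: F_def hF_def X1_def Xt_def)
  qed
qed

end
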